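(* (a) Let $x,y\in\mathbb H(\mathbb Q)\setminus\mathbb Q$ be rational quaternions, neither of which is a rational scalar, and suppose the real part $y_0$ of $y$ is nonzero. Then $yxy^{-1}$ commutes with $x$ if and only if $y$ commutes with $x$. (b) Let $p,l$ be distinct odd primes and let $\Gamma=\psi(\tilde\Gamma)$ be the group described in the context. For $a,b\in\Gamma$, the element $bab^{-1}$ commutes with $a$ if and only if $b$ commutes with $a$.
   Context: $\mathbb H(\mathbb Q)$ denotes the rational quaternions $x=x_0+x_1i+x_2j+x_3k$, $x_i\in\mathbb Q$, with $i^2=j^2=k^2=-1$, $ij=-ji=k$; $\mathbb Q\subset\mathbb H(\mathbb Q)$ is the set of quaternions with $x_1=x_2=x_3=0$; $x_0$ is the real part. $\mathbb H(\mathbb Z)\subset\mathbb H(\mathbb Q)$ denotes those with integer coordinates, and $|x|^2=x_0^2+x_1^2+x_2^2+x_3^2$. Let $p,l$ be distinct odd primes. Fix $c_p,d_p\in\mathbb Q_p$ with $c_p^2+d_p^2+1=0$ and $c_l,d_l\in\mathbb Q_l$ with $c_l^2+d_l^2+1=0$. Define $\psi:\mathbb H(\mathbb Z)\setminus\{0\}\to G:=PGL_2(\mathbb Q_p)\times PGL_2(\mathbb Q_l)$ by sending $x$ to the class of the pair $\left(\begin{pmatrix} x_0+x_1c_p+x_3d_p & -x_1d_p+x_2+x_3c_p\\ -x_1d_p-x_2+x_3c_p & x_0-x_1c_p-x_3d_p\end{pmatrix},\begin{pmatrix} x_0+x_1c_l+x_3d_l & -x_1d_l+x_2+x_3c_l\\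 -x_1d_l-x_2+x_3c_l & x_0-x_1c_l-x_3d_l\end{pmatrix}\right)$. Let $\tilde\Gamma$ be the set of $x\in\mathbb H(\mathbb Z)$ such that $|x|^2=p^rl^s$ for some integers $r,s\ge 0$, and such that $x_0$ is odd and $x_1,x_2,x_3$ are even if $|x|^2\equiv 1\pmod 4$, while $x_1$ is even and $x_0,x_2,x_3$ are odd if $|x|^2\equiv 3\pmod 4$. Then $\Gamma=\psi(\tilde\Gamma)$ is a torsion-free cocompact lattice in $G$. *)

theory Defs
  imports "HOL-Analysis.Analysis" "HOL-Computational_Algebra.Primes"
begin

text \<open>The quaternion x0 + x1 i + x2 j + x3 k with coefficients in a ring;
  H(Q) is  rat quat  and H(Z) is  int quat.\<close>
datatype 'a quat = Quat (q0: 'a) (q1: 'a) (q2: 'a) (q3: 'a)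

text \<open>Hamilton product, i^2 = j^2 = k^2 = -1, ij = -ji = k.\<close>
definition qmult :: "'a::comm_ring_1 quat \<Rightarrow> 'a quat \<Rightarrow> 'a quat" (infixl \<open>\<star>\<close> 70) where
  "qmult x y = Quat
     (q0 x * q0 y - q1 x * q1 y - q2 x * q2 y - q3 x * q3 y)
     (q0 x * q1 y + q1 x * q0 y + q2 x * q3 y - q3 x * q2 y)
     (q0 x * q2 y - q1 x * q3 y + q2 x * q0 y + q3 x * q1 y)
     (q0 x * q3 y + q1 x * q2 y - q2 x * q1 y + q3 x * q0 y)"

definition qnorm2 :: "'a::comm_ring_1 quat \<Rightarrow> 'a" where
  "qnorm2 x = (q0 x)^2 + (q1 x)^2 + (q2 x)^2 + (q3 x)^2"

definition qinv :: "'a::field quat \<Rightarrow> 'a quat" where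
  "qinv x = (let n = qnorm2 x in
     Quat (q0 x / n) (- q1 x / n) (- q2 x / n) (- q3 x / n))"

definition is_scalar :: "'a::zero quat \<Rightarrow> bool" where
  "is_scalar x \<longleftrightarrow> q1 x = 0 \<and> q2 x = 0 \<and> q3 x = 0"

definition Gamma_tilde :: "nat \<Rightarrow> nat \<Rightarrow> int quat set" where
  "Gamma_tilde p l = {x.
     (\<exists>r s::nat. qnorm2 x = int p ^ r * int l ^ s) \<and>
     (qnorm2 x mod 4 = 1 \<longrightarrow> odd (q0 x) \<and> even (q1 x) \<and> even (q2 x) \<and> even (q3 x)) \<and>
     (qnorm2 x mod 4 = 3 \<longrightarrow> even (q1 x) \<and> odd (q0 x) \<and> odd (q2 x) \<and> odd (q3 x))}"

text \<open>The matrix attached to an integral quaternion x and a pair (c,d) with c^2+d^2+1=0.\<close>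
definition psi_mat :: "'a::field \<Rightarrow> 'a \<Rightarrow> int quat \<Rightarrow> 'a^2^2" where
  "psi_mat c d x = (let x0 = of_int (q0 x); x1 = of_int (q1 x);
                         x2 = of_int (q2 x); x3 = of_int (q3 x) in
     vector [vector [x0 + x1 * c + x3 * d, - x1 * d + x2 + x3 * c],
             vector [- x1 * d - x2 + x3 * c, x0 - x1 * c - x3 * d]])"

text \<open>Elements of G = PGL_2(K_p) x PGL_2(K_l) are represented by pairs of invertible
  matrices; two representatives give the same element of G iff each component agrees
  up to a nonzero scalar.\<close>
definition pgl_eq :: "'a::field^2^2 \<Rightarrow> 'a^2^2 \<Rightarrow> bool" where
  "pgl_eq A B \<longleftrightarrow> (\<exists>\<mu>. \<mu> \<noteq> 0 \<and> A = mat \<mu> ** B)"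

definition G_eq :: "('a::field^2^2) \<times> ('b::field^2^2) \<Rightarrow> ('a^2^2) \<times> ('b^2^2) \<Rightarrow> bool" where
  "G_eq a b \<longleftrightarrow> pgl_eq (fst a) (fst b) \<and> pgl_eq (snd a) (snd b)"

definition G_mult :: "('a::field^2^2) \<times> ('b::field^2^2) \<Rightarrow> ('a^2^2) \<times> ('b^2^2) \<Rightarrow> ('a^2^2) \<times> ('b^2^2)" where
  "G_mult a b = (fst a ** fst b, snd a ** snd b)"

definition G_inv :: "('a::field^2^2) \<times> ('b::field^2^2) \<Rightarrow> ('a^2^2) \<times> ('b^2^2)" where
  "G_inv a = (matrix_inv (fst a), matrix_inv (snd a))"

definition G_commute :: "('a::field^2^2) \<times> ('b::field^2^2) \<Rightarrow> ('a^2^2) \<times> ('b^2^2) \<Rightarrow> bool" where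
  "G_commute a b \<longleftrightarrow> G_eq (G_mult a b) (G_mult b a)"

definition psi :: "'a::field \<Rightarrow> 'a \<Rightarrow> 'b::field \<Rightarrow> 'b \<Rightarrow> int quat \<Rightarrow> ('a^2^2) \<times> ('b^2^2)" where
  "psi cp dp cl dl x = (psi_mat cp dp x, psi_mat cl dl x)"

end

theory Submission imports Defs begin

lemma cross_core:
  fixes s w1 w2 w3 e1 e2 e3 :: "'a::linordered_field"
  defines "u1 \<equiv> w2 * e3 - w3 * e2" and "u2 \<equiv> w3 * e1 - w1 * e3" and "u3 \<equiv> w1 * e2 - w2 * e1"
  defines "wv \<equiv> w1 * e1 + w2 * e2 + w3 * e3" and "vv \<equiv> e1 * e1+e2 * e2+e3 * e3"
  assumes s: "s \<noteq> 0"
  and E1: "wv * u1 + s * (u2 * e3 - u3 * e2) = 0"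
  and E2: "wv * u2 + s * (u3 * e1 - u1 * e3) = 0"
  and E3: "wv * u3 + s * (u1 * e2 - u2 * e1) = 0"
  shows "u1 = 0 \<and> u2 = 0 \<and> u3 = 0"
proof -
  have "u1 * (wv * u1 + s * (u2 * e3 - u3 * e2)) + u2 * (wv * u2 + s * (u3 * e1 - u1 * e3)) + u3 * (wv * u3 + s * (u1 * e2 - u2 * e1))
     = wv * (u1 * u1+u2 * u2+u3 * u3)" by (simp add: algebra_simps)
  hence h: "wv * (u1 * u1+u2 * u2+u3 * u3) = 0" using E1 E2 E3 by simp
  show ?thesis
  proof (cases "wv = 0")
    case False
    with h have "u1 * u1+u2 * u2+u3 * u3 = 0" by simp
    thus ?thesis by (metis add_nonneg_eq_0_iff mult_eq_0_iff zero_le_square add_nonneg_nonneg)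
  next
    case True
    have a1: "u2 * e3 - u3 * e2 = wv * e1 - vv * w1" unfolding u1_def u2_def u3_def wv_def vv_def by (simp add: algebra_simps)
    have a2: "u3 * e1 - u1 * e3 = wv * e2 - vv * w2" unfolding u1_def u2_def u3_def wv_def vv_def by (simp add: algebra_simps)
    have a3: "u1 * e2 - u2 * e1 = wv * e3 - vv * w3" unfolding u1_def u2_def u3_def wv_def vv_def by (simp add: algebra_simps)
    from E1 E2 E3 True s have "vv * w1 = 0" "vv * w2 = 0" "vv * w3 = 0" by (simp_all add: a1 a2 a3)
    then have "vv = 0 \<or> (w1 = 0 \<and> w2 = 0 \<and> w3 = 0)" by auto
    moreover have "vv = 0 \<Longrightarrow> e1 = 0 \<and> e2 = 0 \<and> e3 = 0" unfolding vv_def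
      by (metis add_nonneg_eq_0_iff mult_eq_0_iff zero_le_square add_nonneg_nonneg)
    ultimately show ?thesis unfolding u1_def u2_def u3_def by auto
  qed
qed


lemma quat_eq_iff: "(x = y) \<longleftrightarrow> q0 x = q0 y \<and> q1 x = q1 y \<and> q2 x = q2 y \<and> q3 x = q3 y"
  by (cases x; cases y) auto

lemma conj_poly:
  fixes s w1 w2 w3 a e1 e2 e3 :: "'a::comm_ring_1"
  shows "Quat s w1 w2 w3 \<star> Quat a e1 e2 e3 \<star> Quat s (-w1) (-w2) (-w3) =
    Quat (a * (s^2+w1^2+w2^2+w3^2)) (((s^2 - (w1^2+w2^2+w3^2)) * e1 + 2 * (w1 * e1 + w2 * e2 + w3 * e3) * w1 + 2 * s * (w2 * e3 - w3 * e2)))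
           (((s^2 - (w1^2+w2^2+w3^2)) * e2 + 2 * (w1 * e1 + w2 * e2 + w3 * e3) * w2 + 2 * s * (w3 * e1 - w1 * e3)))
           (((s^2 - (w1^2+w2^2+w3^2)) * e3 + 2 * (w1 * e1 + w2 * e2 + w3 * e3) * w3 + 2 * s * (w1 * e2 - w2 * e1)))"
  unfolding quat_eq_iff qmult_def quat.sel
  by (simp add: algebra_simps power2_eq_square)


definition qsc :: "'a::comm_ring_1 \<Rightarrow> 'a quat \<Rightarrow> 'a quat" where
  "qsc k x = Quat (k * q0 x) (k * q1 x) (k * q2 x) (k * q3 x)"

lemma qsc_right: "x \<star> qsc k y = qsc k (x \<star> y)"
  unfolding quat_eq_iff qmult_def qsc_def by (simp add: algebra_simps)
lemma qsc_left: "qsc k x \<star> y = qsc k (x \<star> y)"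
  unfolding quat_eq_iff qmult_def qsc_def by (simp add: algebra_simps)
lemma qsc_inj: "(k::'a::field) \<noteq> 0 \<Longrightarrow> qsc k x = qsc k y \<longleftrightarrow> x = y"
  unfolding quat_eq_iff qsc_def by simp

lemma qinv_qsc: "qinv (Quat s w1 w2 w3) = qsc (1 / qnorm2 (Quat s w1 w2 w3)) (Quat s (-w1) (-w2) (-w3))"
  unfolding quat_eq_iff qinv_def qsc_def Let_def by simp

lemma comm_iff:
  fixes b r1 r2 r3 a e1 e2 e3 :: "'a::field_char_0"
  shows "Quat b r1 r2 r3 \<star> Quat a e1 e2 e3 = Quat a e1 e2 e3 \<star> Quat b r1 r2 r3 \<longleftrightarrow>
     r2 * e3 - r3 * e2 = 0 \<and> r3 * e1 - r1 * e3 = 0 \<and> r1 * e2 - r2 * e1 = 0"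
  unfolding quat_eq_iff qmult_def quat.sel
  by (auto simp: algebra_simps) 

lemma partA:
  fixes x y :: "'a::linordered_field quat"
  assumes y0: "q0 y \<noteq> 0"
  shows "(y \<star> x \<star> qinv y) \<star> x = x \<star> (y \<star> x \<star> qinv y) \<longleftrightarrow> y \<star> x = x \<star> y"
proof -
  obtain s w1 w2 w3 where y: "y = Quat s w1 w2 w3" by (cases y)
  obtain a e1 e2 e3 where x: "x = Quat a e1 e2 e3" by (cases x)
  have s: "s \<noteq> 0" using y0 y by simp
  define N where "N = s^2+w1^2+w2^2+w3^2"
  have "s^2 > 0" using s by simp
  then have Npos: "N > 0" unfolding N_def by (simp add: add_pos_nonneg)
  have nq: "qnorm2 y = N" unfolding y N_def qnorm2_def by simp
  define R1 where "R1 = (s^2 - (w1^2+w2^2+w3^2)) * e1 + 2 * (w1 * e1 + w2 * e2 + w3 * e3) * w1 + 2 * s * (w2 * e3 - w3 * e2)"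
  define R2 where "R2 = (s^2 - (w1^2+w2^2+w3^2)) * e2 + 2 * (w1 * e1 + w2 * e2 + w3 * e3) * w2 + 2 * s * (w3 * e1 - w1 * e3)"
  define R3 where "R3 = (s^2 - (w1^2+w2^2+w3^2)) * e3 + 2 * (w1 * e1 + w2 * e2 + w3 * e3) * w3 + 2 * s * (w1 * e2 - w2 * e1)"
  have P: "y \<star> x \<star> qinv y = qsc (1/N) (Quat (a * N) R1 R2 R3)"
  proof -
    have qi: "qinv y = qsc (1/N) (Quat s (-w1) (-w2) (-w3))" using qinv_qsc[of s w1 w2 w3] nq y by simp
    show ?thesis unfolding qi unfolding y x qsc_right conj_poly R1_def R2_def R3_def N_def by simp
  qed
  have "(y \<star> x \<star> qinv y) \<star> x = x \<star> (y \<star> x \<star> qinv y) \<longleftrightarrow>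
        Quat (a * N) R1 R2 R3 \<star> x = x \<star> Quat (a * N) R1 R2 R3"
    unfolding P qsc_left qsc_right using Npos by (simp add: qsc_inj)
  also have "\<dots> \<longleftrightarrow> R2 * e3 - R3 * e2 = 0 \<and> R3 * e1 - R1 * e3 = 0 \<and> R1 * e2 - R2 * e1 = 0"
    unfolding x by (rule comm_iff)
  also have "\<dots> \<longleftrightarrow> (w2 * e3 - w3 * e2) = 0 \<and> (w3 * e1 - w1 * e3) = 0 \<and> (w1 * e2 - w2 * e1) = 0"
  proof
    assume h: "R2 * e3 - R3 * e2 = 0 \<and> R3 * e1 - R1 * e3 = 0 \<and> R1 * e2 - R2 * e1 = 0"
    have i1: "R2 * e3 - R3 * e2 = 2 * ((w1 * e1 + w2 * e2 + w3 * e3) * (w2 * e3 - w3 * e2) + s * ((w3 * e1 - w1 * e3) * e3 - (w1 * e2 - w2 * e1) * e2))"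
      unfolding R1_def R2_def R3_def by (simp add: algebra_simps)
    have i2: "R3 * e1 - R1 * e3 = 2 * ((w1 * e1 + w2 * e2 + w3 * e3) * (w3 * e1 - w1 * e3) + s * ((w1 * e2 - w2 * e1) * e1 - (w2 * e3 - w3 * e2) * e3))"
      unfolding R1_def R2_def R3_def by (simp add: algebra_simps)
    have i3: "R1 * e2 - R2 * e1 = 2 * ((w1 * e1 + w2 * e2 + w3 * e3) * (w1 * e2 - w2 * e1) + s * ((w2 * e3 - w3 * e2) * e2 - (w3 * e1 - w1 * e3) * e1))"
      unfolding R1_def R2_def R3_def by (simp add: algebra_simps)
    show "(w2 * e3 - w3 * e2) = 0 \<and> (w3 * e1 - w1 * e3) = 0 \<and> (w1 * e2 - w2 * e1) = 0"
      by (rule cross_core[OF s]) (use h i1 i2 i3 in simp_all)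
  next
    assume h: "(w2 * e3 - w3 * e2) = 0 \<and> (w3 * e1 - w1 * e3) = 0 \<and> (w1 * e2 - w2 * e1) = 0"
    have i1: "R2 * e3 - R3 * e2 = 2 * ((w1 * e1 + w2 * e2 + w3 * e3) * (w2 * e3 - w3 * e2) + s * ((w3 * e1 - w1 * e3) * e3 - (w1 * e2 - w2 * e1) * e2))"
      unfolding R1_def R2_def R3_def by (simp add: algebra_simps)
    have i2: "R3 * e1 - R1 * e3 = 2 * ((w1 * e1 + w2 * e2 + w3 * e3) * (w3 * e1 - w1 * e3) + s * ((w1 * e2 - w2 * e1) * e1 - (w2 * e3 - w3 * e2) * e3))"
      unfolding R1_def R2_def R3_def by (simp add: algebra_simps)
    have i3: "R1 * e2 - R2 * e1 = 2 * ((w1 * e1 + w2 * e2 + w3 * e3) * (w1 * e2 - w2 * e1) + s * ((w2 * e3 - w3 * e2) * e2 - (w3 * e1 - w1 * e3) * e1))"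
      unfolding R1_def R2_def R3_def by (simp add: algebra_simps)
    show "R2 * e3 - R3 * e2 = 0 \<and> R3 * e1 - R1 * e3 = 0 \<and> R1 * e2 - R2 * e1 = 0"
      using h i1 i2 i3 by simp
  qed
  also have "\<dots> \<longleftrightarrow> y \<star> x = x \<star> y"
    unfolding x y comm_iff by simp
  finally show ?thesis .
qed



definition phi :: "'a::field \<Rightarrow> 'a \<Rightarrow> 'a quat \<Rightarrow> 'a^2^2" where
  "phi c d x = vector [vector [q0 x + q1 x * c + q3 x * d, - q1 x * d + q2 x + q3 x * c],
             vector [- q1 x * d - q2 x + q3 x * c, q0 x - q1 x * c - q3 x * d]]"

lemma mat22_eq: "(A::'a^2^2) = B \<longleftrightarrow> A$1$1 = B$1$1 \<and> A$1$2 = B$1$2 \<and> A$2$1 = B$2$1 \<and> A$2$2 = B$2$2"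
  by (auto simp: vec_eq_iff forall_2)

lemma phi_mult:
  fixes c d :: "'a::field"
  assumes cd: "c^2 + d^2 + 1 = 0"
  shows "phi c d (x \<star> y) = phi c d x ** phi c d y"
proof -
  have "1 + (c * c + d * d) = 0" using cd by (simp add: power2_eq_square algebra_simps)
  then have "c * c + d * d = - 1" by (simp add: add_eq_0_iff)
  then have cc: "c * c = - 1 - d * d" by (simp add: eq_diff_eq)
  show ?thesis
    unfolding mat22_eq phi_def qmult_def
    apply (simp add: matrix_matrix_mult_def sum_2)
    apply (insert cd)
    apply (intro conjI)
    by algebra+
qed

lemma phi_one: "phi c d (Quat 1 0 0 0) = mat 1"
  unfolding mat22_eq phi_def by (simp add: mat_def)

lemma qinv_right: "qnorm2 (y::'a::field quat) \<noteq> 0 \<Longrightarrow> y \<star> qinv y = Quat 1 0 0 0"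
proof (cases y)
  case (Quat s w1 w2 w3)
  assume n: "qnorm2 y \<noteq> 0"
  have e: "Quat s w1 w2 w3 \<star> Quat s (-w1) (-w2) (-w3) = Quat (qnorm2 (Quat s w1 w2 w3)) 0 0 0"
    unfolding quat_eq_iff qmult_def qnorm2_def by (simp add: algebra_simps power2_eq_square)
  show ?thesis using n unfolding Quat qinv_qsc qsc_right e by (simp add: qsc_def)
qed
lemma qinv_left: "qnorm2 (y::'a::field quat) \<noteq> 0 \<Longrightarrow> qinv y \<star> y = Quat 1 0 0 0"
proof (cases y)
  case (Quat s w1 w2 w3)
  assume n: "qnorm2 y \<noteq> 0"
  have e: "Quat s (-w1) (-w2) (-w3) \<star> Quat s w1 w2 w3 = Quat (qnorm2 (Quat s w1 w2 w3)) 0 0 0"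
    unfolding quat_eq_iff qmult_def qnorm2_def by (simp add: algebra_simps power2_eq_square)
  show ?thesis using n unfolding Quat qinv_qsc qsc_left e by (simp add: qsc_def)
qed

lemma matrix_inv_eq:
  fixes A B :: "'a::field^2^2"
  assumes "A ** B = mat 1" "B ** A = mat 1"
  shows "matrix_inv A = B"
proof -
  have ex: "\<exists>A'. A ** A' = mat 1 \<and> A' ** A = mat 1" using assms by blast
  define C where "C = matrix_inv A"
  have C: "A ** C = mat 1 \<and> C ** A = mat 1"
    unfolding C_def matrix_inv_def by (rule someI_ex[OF ex])
  have "C = C ** (A ** B)" using assms by simp
  also have "\<dots> = (C ** A) ** B" by (simp add: matrix_mul_assoc)
  also have "\<dots> = B" using C by simp
  finally show ?thesis unfolding C_def .
qed

lemma phi_inv: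
  fixes c d :: "'a::field"
  assumes cd: "c^2 + d^2 + 1 = 0" and n: "qnorm2 y \<noteq> 0"
  shows "matrix_inv (phi c d y) = phi c d (qinv y)"
  by (rule matrix_inv_eq) (simp_all add: phi_mult[OF cd, symmetric] qinv_right qinv_left n phi_one)

definition hq :: "rat quat \<Rightarrow> 'a::field_char_0 quat" where
  "hq x = Quat (of_rat (q0 x)) (of_rat (q1 x)) (of_rat (q2 x)) (of_rat (q3 x))"
definition iq :: "int quat \<Rightarrow> rat quat" where
  "iq x = Quat (of_int (q0 x)) (of_int (q1 x)) (of_int (q2 x)) (of_int (q3 x))"

lemma hq_mult: "hq (x \<star> y) = hq x \<star> hq y"
  unfolding quat_eq_iff hq_def qmult_def by (simp add: of_rat_mult of_rat_add of_rat_diff)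

lemma hq_norm: "qnorm2 (hq x) = of_rat (qnorm2 x)"
  unfolding hq_def qnorm2_def by (simp add: of_rat_add of_rat_power)

lemma hq_qinv: "hq (qinv x) = qinv (hq x)"
  unfolding quat_eq_iff hq_def qinv_def Let_def hq_norm[unfolded hq_def]
  by (simp add: of_rat_divide of_rat_minus)

lemma psi_mat_phi: "psi_mat c d x = phi c d (hq (iq x))"
  unfolding psi_mat_def phi_def hq_def iq_def Let_def by simp

lemma qnorm2_mult: "qnorm2 (x \<star> y) = qnorm2 x * qnorm2 (y::'a::comm_ring_1 quat)"
  unfolding qnorm2_def qmult_def by (simp add: algebra_simps power2_eq_square)

lemma qnorm2_pos: "q0 (x::'a::linordered_field quat) \<noteq> 0 \<Longrightarrow> qnorm2 x > 0"
  unfolding qnorm2_def by (simp add: add_pos_nonneg)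

lemma phi_inj:
  fixes c d \<mu> :: "'a::field_char_0"
  assumes cd: "c^2 + d^2 + 1 = 0" and h: "phi c d u = mat \<mu> ** phi c d t"
  shows "q0 u = \<mu> * q0 t \<and> q1 u = \<mu> * q1 t \<and> q2 u = \<mu> * q2 t \<and> q3 u = \<mu> * q3 t"
proof -
  define f0 where "f0 = q0 u - \<mu> * q0 t"
  define f1 where "f1 = q1 u - \<mu> * q1 t"
  define f2 where "f2 = q2 u - \<mu> * q2 t"
  define f3 where "f3 = q3 u - \<mu> * q3 t"
  from h have E: "f0 + f1 * c + f3 * d = 0" "- f1 * d + f2 + f3 * c = 0"
     "- f1 * d - f2 + f3 * c = 0" "f0 - f1 * c - f3 * d = 0"
    unfolding mat22_eq phi_def f0_def f1_def f2_def f3_def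
    by (simp_all add: matrix_matrix_mult_def sum_2 mat_def algebra_simps)
  have "2 * f0 = (f0 + f1 * c + f3 * d) + (f0 - f1 * c - f3 * d)" by (simp add: algebra_simps)
  also have "\<dots> = 0 + 0" by (simp only: E(1) E(4))
  finally have z0: "f0 = 0" by simp
  have "2 * f2 = (- f1 * d + f2 + f3 * c) - (- f1 * d - f2 + f3 * c)" by (simp add: algebra_simps)
  also have "\<dots> = 0 - 0" by (simp only: E(2) E(3))
  finally have z2: "f2 = 0" by simp
  have A: "f1 * c + f3 * d = 0" using E(1) z0 by simp
  have B: "f3 * c - f1 * d = 0" using E(2) z2 by (simp add: algebra_simps)
  have "1 + (c * c + d * d) = 0" using cd by (simp add: power2_eq_square algebra_simps)
  then have cc: "c * c + d * d = - 1" by (simp add: add_eq_0_iff)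
  have "- f1 = f1 * (c * c + d * d)" using cc by simp
  also have "\<dots> = c * (f1 * c + f3 * d) - d * (f3 * c - f1 * d)" by (simp add: algebra_simps)
  finally have z1: "f1 = 0" using A B by simp
  have "- f3 = f3 * (c * c + d * d)" using cc by simp
  also have "\<dots> = d * (f1 * c + f3 * d) + c * (f3 * c - f1 * d)" by (simp add: algebra_simps)
  finally have z3: "f3 = 0" using A B by simp
  show ?thesis using z0 z1 z2 z3 unfolding f0_def f1_def f2_def f3_def by simp
qed


lemma qnorm2_qsc: "qnorm2 (qsc m q) = m^2 * qnorm2 q"
  unfolding qnorm2_def qsc_def by (simp add: algebra_simps power2_eq_square)

lemma qsc_one: "qsc 1 q = q" unfolding qsc_def quat_eq_iff by simp

lemma anticomm:
  fixes z x :: "rat quat"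
  assumes z0: "q0 z \<noteq> 0" and x0: "q0 x \<noteq> 0" and h: "z \<star> x = qsc m (x \<star> z)"
  shows "z \<star> x = x \<star> z"
proof -
  have Nz: "qnorm2 z > 0" "qnorm2 x > 0" using z0 x0 by (simp_all add: qnorm2_pos)
  have "qnorm2 z * qnorm2 x = m^2 * (qnorm2 x * qnorm2 z)"
    using arg_cong[OF h, of qnorm2] by (simp add: qnorm2_mult qnorm2_qsc)
  then have "m^2 = 1" using Nz by (simp add: mult.commute)
  then have "m = 1 \<or> m = -1" by (simp add: power2_eq_1_iff)
  moreover have "m \<noteq> -1"
  proof
    assume m: "m = -1"
    obtain a v1 v2 v3 where z: "z = Quat a v1 v2 v3" by (cases z)
    obtain b w1 w2 w3 where x: "x = Quat b w1 w2 w3" by (cases x)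
    from h m have E: "a * b - v1 * w1 - v2 * w2 - v3 * w3 = - (b * a - w1 * v1 - w2 * v2 - w3 * v3)"
      "a * w1 + v1 * b + v2 * w3 - v3 * w2 = - (b * v1 + w1 * a + w2 * v3 - w3 * v2)"
      "a * w2 - v1 * w3 + v2 * b + v3 * w1 = - (b * v2 - w1 * v3 + w2 * a + w3 * v1)"
      "a * w3 + v1 * w2 - v2 * w1 + v3 * b = - (b * v3 + w1 * v2 - w2 * v1 + w3 * a)"
      unfolding z x quat_eq_iff qmult_def qsc_def by simp_all
    have r: "a * b = v1 * w1 + v2 * w2 + v3 * w3" using E(1) by (simp add: algebra_simps)
    have l1: "b * v1 = - (a * w1)" using E(2) by (simp add: algebra_simps)
    have l2: "b * v2 = - (a * w2)" using E(3) by (simp add: algebra_simps)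
    have l3: "b * v3 = - (a * w3)" using E(4) by (simp add: algebra_simps)
    have "a * (b * b + w1 * w1 + w2 * w2 + w3 * w3) = b * (a * b) + (a * w1) * w1 + (a * w2) * w2 + (a * w3) * w3"
      by (simp add: algebra_simps)
    also have "\<dots> = (b * v1 + a * w1) * w1 + (b * v2 + a * w2) * w2 + (b * v3 + a * w3) * w3"
      unfolding r by (simp add: algebra_simps)
    also have "\<dots> = 0" using l1 l2 l3 by simp
    finally have "a * (b * b + w1 * w1 + w2 * w2 + w3 * w3) = 0" .
    moreover have "b * b + w1 * w1 + w2 * w2 + w3 * w3 > 0"
      using qnorm2_pos[OF x0] unfolding x qnorm2_def by (simp add: power2_eq_square)
    ultimately show False using z0 z by simp
  qed
  ultimately have "m = 1" by blast
  then show ?thesis using h by (simp add: qsc_one)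
qed

lemma mu_rat:
  fixes \<mu> :: "'a::field_char_0"
  assumes "of_rat r = \<mu> * of_rat s" "s \<noteq> 0"
  shows "\<exists>m. \<mu> = of_rat m"
proof -
  have "\<mu> = of_rat (r / s)" using assms by (simp add: of_rat_divide field_simps)
  then show ?thesis by blast
qed

lemma rat_scalar:
  fixes \<mu> :: "'a::field_char_0"
  assumes h: "q0 (hq u :: 'a quat) = \<mu> * q0 (hq t) \<and> q1 (hq u :: 'a quat) = \<mu> * q1 (hq t) \<and>
              q2 (hq u :: 'a quat) = \<mu> * q2 (hq t) \<and> q3 (hq u :: 'a quat) = \<mu> * q3 (hq t)"
    and t: "qnorm2 t \<noteq> 0"
  shows "\<exists>m. u = qsc m t"
proof -
  have h': "of_rat (q0 u) = \<mu> * of_rat (q0 t)" "of_rat (q1 u) = \<mu> * of_rat (q1 t)"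
    "of_rat (q2 u) = \<mu> * of_rat (q2 t)" "of_rat (q3 u) = \<mu> * of_rat (q3 t)"
    using h by (simp_all add: hq_def)
  have "q0 t \<noteq> 0 \<or> q1 t \<noteq> 0 \<or> q2 t \<noteq> 0 \<or> q3 t \<noteq> 0"
    using t unfolding qnorm2_def by auto
  then obtain m where m: "\<mu> = of_rat m" using mu_rat h' by metis
  have "q0 u = m * q0 t" "q1 u = m * q1 t" "q2 u = m * q2 t" "q3 u = m * q3 t"
    using h' unfolding m by (simp_all flip: of_rat_mult)
  then have "u = qsc m t" unfolding quat_eq_iff qsc_def by simp
  then show ?thesis by blast
qed

lemma GC:
  fixes c d :: "'a::field_char_0"
  assumes cd: "c^2 + d^2 + 1 = 0" and U0: "q0 U \<noteq> 0" and X0: "q0 X \<noteq> 0"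
  shows "pgl_eq (phi c d (hq U :: 'a quat) ** phi c d (hq X)) (phi c d (hq X) ** phi c d (hq U)) \<longleftrightarrow> U \<star> X = X \<star> U"
proof
  assume "pgl_eq (phi c d (hq U :: 'a quat) ** phi c d (hq X)) (phi c d (hq X) ** phi c d (hq U))"
  then obtain \<mu> where "phi c d (hq (U \<star> X) :: 'a quat) = mat \<mu> ** phi c d (hq (X \<star> U))"
    unfolding pgl_eq_def hq_mult phi_mult[OF cd] by blast
  from phi_inj[OF cd this] have "q0 (hq (U \<star> X) :: 'a quat) = \<mu> * q0 (hq (X \<star> U)) \<and> q1 (hq (U \<star> X) :: 'a quat) = \<mu> * q1 (hq (X \<star> U)) \<and>
              q2 (hq (U \<star> X) :: 'a quat) = \<mu> * q2 (hq (X \<star> U)) \<and> q3 (hq (U \<star> X) :: 'a quat) = \<mu> * q3 (hq (X \<star> U))" .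
  moreover have "qnorm2 (X \<star> U) \<noteq> 0"
    using qnorm2_pos[OF U0] qnorm2_pos[OF X0] by (simp add: qnorm2_mult)
  ultimately obtain m where "U \<star> X = qsc m (X \<star> U)" using rat_scalar by blast
  then show "U \<star> X = X \<star> U" using anticomm U0 X0 by blast
next
  assume "U \<star> X = X \<star> U"
  then show "pgl_eq (phi c d (hq U :: 'a quat) ** phi c d (hq X)) (phi c d (hq X) ** phi c d (hq U))"
    unfolding pgl_eq_def phi_mult[OF cd, symmetric] hq_mult[symmetric] by (intro exI[of _ 1]) simp
qed


lemma q0_conj:
  fixes x y :: "'a::field quat"
  assumes "qnorm2 y \<noteq> 0"
  shows "q0 (y \<star> x \<star> qinv y) = q0 x"
proof -
  obtain s w1 w2 w3 where y: "y = Quat s w1 w2 w3" by (cases y)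
  obtain a e1 e2 e3 where x: "x = Quat a e1 e2 e3" by (cases x)
  have n: "s^2+w1^2+w2^2+w3^2 \<noteq> 0" using assms y by (simp add: qnorm2_def)
  show ?thesis unfolding y x qinv_qsc qsc_right conj_poly using n
    by (simp add: qsc_def qnorm2_def)
qed

lemma Gamma_q0:
  assumes "x \<in> Gamma_tilde p l" "odd p" "odd l"
  shows "q0 x \<noteq> 0"
proof -
  obtain r s where n: "qnorm2 x = int p ^ r * int l ^ s" and
    c1: "qnorm2 x mod 4 = 1 \<longrightarrow> odd (q0 x)" and c3: "qnorm2 x mod 4 = 3 \<longrightarrow> odd (q0 x)"
    using assms(1) unfolding Gamma_tilde_def by blast
  have "odd (qnorm2 x)" unfolding n using assms(2,3) by simp
  then have "qnorm2 x mod 4 = 1 \<or> qnorm2 x mod 4 = 3" by presburger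
  then have "odd (q0 x)" using c1 c3 by blast
  then show ?thesis by auto
qed

lemma iq_q0: "q0 (iq x) = of_int (q0 x)" by (simp add: iq_def)

lemma mainB:
  fixes cp dp :: "'a::field_char_0" and cl dl :: "'b::field_char_0"
  assumes cdp: "cp^2 + dp^2 + 1 = 0" and cdl: "cl^2 + dl^2 + 1 = 0"
    and x0: "q0 x \<noteq> 0" and y0: "q0 y \<noteq> 0"
  shows "G_commute (G_mult (G_mult (psi cp dp cl dl y) (psi cp dp cl dl x)) (G_inv (psi cp dp cl dl y))) (psi cp dp cl dl x)
     \<longleftrightarrow> G_commute (psi cp dp cl dl y) (psi cp dp cl dl x)"
proof -
  define X where "X = iq x"
  define Y where "Y = iq y"
  have X0: "q0 X \<noteq> 0" using x0 by (simp add: X_def iq_q0)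
  have Y0: "q0 Y \<noteq> 0" using y0 by (simp add: Y_def iq_q0)
  have NY: "qnorm2 Y \<noteq> 0" using qnorm2_pos[OF Y0] by simp
  define Z where "Z = Y \<star> X \<star> qinv Y"
  have Z0: "q0 Z \<noteq> 0" using q0_conj[OF NY] X0 by (simp add: Z_def)
  have NYa: "qnorm2 (hq Y :: 'a quat) \<noteq> 0" using NY by (simp add: hq_norm)
  have NYb: "qnorm2 (hq Y :: 'b quat) \<noteq> 0" using NY by (simp add: hq_norm)
  have e: "G_mult (G_mult (psi cp dp cl dl y) (psi cp dp cl dl x)) (G_inv (psi cp dp cl dl y))
        = (phi cp dp (hq Z), phi cl dl (hq Z))"
    unfolding G_mult_def G_inv_def psi_def psi_mat_phi X_def[symmetric] Y_def[symmetric] Z_def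
    by (simp add: phi_inv[OF cdp NYa] phi_inv[OF cdl NYb] hq_mult hq_qinv phi_mult[OF cdp] phi_mult[OF cdl])
  have "G_commute (phi cp dp (hq Z), phi cl dl (hq Z)) (psi cp dp cl dl x) \<longleftrightarrow> Z \<star> X = X \<star> Z"
    unfolding G_commute_def G_eq_def G_mult_def psi_def psi_mat_phi X_def[symmetric]
    using GC[OF cdp Z0 X0] GC[OF cdl Z0 X0] by simp
  also have "\<dots> \<longleftrightarrow> Y \<star> X = X \<star> Y" unfolding Z_def by (rule partA[OF Y0])
  also have "\<dots> \<longleftrightarrow> G_commute (psi cp dp cl dl y) (psi cp dp cl dl x)"
    unfolding G_commute_def G_eq_def G_mult_def psi_def psi_mat_phi X_def[symmetric] Y_def[symmetric]
    using GC[OF cdp Y0 X0] GC[OF cdl Y0 X0] by simp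
  finally show ?thesis unfolding e .
qed

theorem lemma2p5:
  shows "(\<forall>x y :: rat quat. \<not> is_scalar x \<and> \<not> is_scalar y \<and> q0 y \<noteq> 0 \<longrightarrow>
            ((y \<star> x \<star> qinv y) \<star> x = x \<star> (y \<star> x \<star> qinv y) \<longleftrightarrow> y \<star> x = x \<star> y))
       \<and> (\<forall>(p::nat) (l::nat) (cp::'a::field_char_0) dp (cl::'b::field_char_0) dl.
            prime p \<and> prime l \<and> odd p \<and> odd l \<and> p \<noteq> l \<and>
            cp^2 + dp^2 + 1 = 0 \<and> cl^2 + dl^2 + 1 = 0 \<longrightarrow>
            (\<forall>a\<in>psi cp dp cl dl ` Gamma_tilde p l. \<forall>b\<in>psi cp dp cl dl ` Gamma_tilde p l.
               G_commute (G_mult (G_mult b a) (G_inv b)) a \<longleftrightarrow> G_commute b a))"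
proof (intro conjI allI impI ballI)
  fix x y :: "rat quat"
  assume "\<not> is_scalar x \<and> \<not> is_scalar y \<and> q0 y \<noteq> 0"
  then show "(y \<star> x \<star> qinv y) \<star> x = x \<star> (y \<star> x \<star> qinv y) \<longleftrightarrow> y \<star> x = x \<star> y"
    using partA by blast
next
  fix p l :: nat and cp dp :: 'a and cl dl :: 'b and a b
  assume H: "prime p \<and> prime l \<and> odd p \<and> odd l \<and> p \<noteq> l \<and>
            cp^2 + dp^2 + 1 = 0 \<and> cl^2 + dl^2 + 1 = 0"
    and a: "a \<in> psi cp dp cl dl ` Gamma_tilde p l" and b: "b \<in> psi cp dp cl dl ` Gamma_tilde p l"
  obtain x where x: "x \<in> Gamma_tilde p l" "a = psi cp dp cl dl x" using a by blast
  obtain y where y: "y \<in> Gamma_tilde p l" "b = psi cp dp cl dl y" using b by blast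
  show "G_commute (G_mult (G_mult b a) (G_inv b)) a \<longleftrightarrow> G_commute b a"
    unfolding x(2) y(2)
    by (rule mainB) (use H Gamma_q0 x(1) y(1) in auto)
qed

end
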